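(* Let $f\in\mathcal F^{\,r}_{op}$ and let $k$ satisfy $1\le k<\frac{1}{2f(0)}$. Then the inequality $I^{SLD}_\rho(A)\le k\,I^f_\rho(A)$ does not hold for all $n$, all faithful $\rho\in\mathcal D^1_n$ and all self-adjoint $A\in M_n(\mathbb C)$; i.e. there exist $n$, a faithful $\rho\in\mathcal D^1_n$ and a self-adjoint $A$ with $I^{SLD}_\rho(A)>k\,I^f_\rho(A)$. Thus the constant $\frac{1}{2f(0)}$ in $I^{SLD}_\rho(A)\le\frac{1}{2f(0)}I^f_\rho(A)$ is optimal.
   Context: $\mathcal F_{op}$ is the class of functions $f:(0,\infty)\to(0,\infty)$ that are operator monotone, satisfy $f(1)=1$ and $tf(t^{-1})=f(t)$ for all $t>0$. $f(0):=\lim_{x\to0^+}f(x)$, and $\mathcal F^{\,r}_{op}=\{f\in\mathcal F_{op}: f(0)\neq0\}$. $\mathcal D_n^1$ is the set of strictly positive $n\times n$ density matrices. For $x,y>0$, $m_f(x,y)=xf(y/x)$; $L_\rho(X)=\rho X$, $R_\rho(X)=X\rho$, and $m_f(L_\rho,R_\rho)$ multiplies the entry $X_{ij}$ of $X$ (in an orthonormal eigenbasis of $\rho$ with eigenvalues $\lambda_i$) by $m_f(\lambda_i,\lambda_j)$. $\|X\|^2_{\rho,f}=\mathrm{Tr}\big(X^* m_f(L_\rho,R_\rho)^{-1}(X)\big)$. The $f$-information is $I^f_\rho(A)=\frac{f(0)}{2}\|i[\rho,A]\|^2_{\rho,f}$, and $I^{SLD}_\rho:=I^{f_{SLD}}_\rho$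 with $f_{SLD}(x)=\frac{1+x}{2}$. *)

theory Defs
  imports "Jordan_Normal_Form.Schur_Decomposition" Complex_Main
begin

definition mtrace :: "complex mat \<Rightarrow> complex" where
  "mtrace A = (\<Sum>i<dim_row A. A $$ (i,i))"

definition hermitian_n :: "nat \<Rightarrow> complex mat \<Rightarrow> bool" where
  "hermitian_n n A \<longleftrightarrow> A \<in> carrier_mat n n \<and> mat_adjoint A = A"

definition unitary_n :: "nat \<Rightarrow> complex mat \<Rightarrow> bool" where
  "unitary_n n U \<longleftrightarrow> U \<in> carrier_mat n n \<and> mat_adjoint U * U = 1\<^sub>m n \<and> U * mat_adjoint U = 1\<^sub>m n"

definition loewner_le :: "nat \<Rightarrow> complex mat \<Rightarrow> complex mat \<Rightarrow> bool" where
  "loewner_le n A B \<longleftrightarrow> hermitian_n n A \<and> hermitian_n n B \<and>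
     (\<forall>v \<in> carrier_vec n. 0 \<le> Re (((B - A) *\<^sub>v v) \<bullet>c v))"

(* the matrix U diag(g(l_0),...,g(l_{n-1})) U^H  (functional calculus when l are the eigenvalues) *)
definition spec_mat :: "nat \<Rightarrow> complex mat \<Rightarrow> (nat \<Rightarrow> real) \<Rightarrow> complex mat" where
  "spec_mat n U l = U * mat_diag n (\<lambda>i. complex_of_real (l i)) * mat_adjoint U"

(* operator monotone on (0,\<infinity>): for all n and all positive definite A \<le> B
   (given through spectral decompositions A = U diag(l) U^H, B = V diag(m) V^H),
   f(A) \<le> f(B) *)
definition operator_monotone :: "(real \<Rightarrow> real) \<Rightarrow> bool" where
  "operator_monotone f \<longleftrightarrow>
     (\<forall>n U l V m. unitary_n n U \<and> unitary_n n V \<and> (\<forall>i<n. 0 < l i \<and> 0 < m i) \<and>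
        loewner_le n (spec_mat n U l) (spec_mat n V m) \<longrightarrow>
        loewner_le n (spec_mat n U (f \<circ> l)) (spec_mat n V (f \<circ> m)))"

(* the class F_op (f only matters on (0,\<infinity>)) *)
definition F_op :: "(real \<Rightarrow> real) set" where
  "F_op = {f. (\<forall>t>0. 0 < f t) \<and> operator_monotone f \<and> f 1 = 1 \<and>
              (\<forall>t>0. t * f (inverse t) = f t)}"

definition f_zero :: "(real \<Rightarrow> real) \<Rightarrow> real" where
  "f_zero f = Lim (at_right 0) f"

definition F_op_r :: "(real \<Rightarrow> real) set" where
  "F_op_r = {f \<in> F_op. f_zero f \<noteq> 0}"

definition m_f :: "(real \<Rightarrow> real) \<Rightarrow> real \<Rightarrow> real \<Rightarrow> real" where
  "m_f f x y = x * f (y / x)"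

definition faithful_density :: "nat \<Rightarrow> complex mat \<Rightarrow> bool" where
  "faithful_density n \<rho> \<longleftrightarrow> hermitian_n n \<rho> \<and>
     (\<forall>v \<in> carrier_vec n. v \<noteq> 0\<^sub>v n \<longrightarrow> 0 < Re ((\<rho> *\<^sub>v v) \<bullet>c v)) \<and> mtrace \<rho> = 1"

definition eig_decomp :: "complex mat \<Rightarrow> complex mat \<times> (nat \<Rightarrow> real)" where
  "eig_decomp \<rho> = (SOME (U, l). unitary_n (dim_row \<rho>) U \<and> \<rho> = spec_mat (dim_row \<rho>) U l)"

(* m_f(L_\<rho>,R_\<rho>)^{-1}(X): in the eigenbasis of \<rho>, divide X_ij by m_f(\<lambda>_i,\<lambda>_j) *)
definition mf_LR_inv :: "(real \<Rightarrow> real) \<Rightarrow> complex mat \<Rightarrow> complex mat \<Rightarrow> complex mat" where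
  "mf_LR_inv f \<rho> X = (case eig_decomp \<rho> of (U, l) \<Rightarrow>
     let n = dim_row \<rho>; Y = mat_adjoint U * X * U in
     U * mat n n (\<lambda>(i,j). Y $$ (i,j) / complex_of_real (m_f f (l i) (l j))) * mat_adjoint U)"

definition norm_sq_f :: "(real \<Rightarrow> real) \<Rightarrow> complex mat \<Rightarrow> complex mat \<Rightarrow> real" where
  "norm_sq_f f \<rho> X = Re (mtrace (mat_adjoint X * mf_LR_inv f \<rho> X))"

definition commutator :: "complex mat \<Rightarrow> complex mat \<Rightarrow> complex mat" where
  "commutator A B = A * B - B * A"

definition f_information :: "(real \<Rightarrow> real) \<Rightarrow> complex mat \<Rightarrow> complex mat \<Rightarrow> real" where
  "f_information f \<rho> A = f_zero f / 2 * norm_sq_f f \<rho> (\<i> \<cdot>\<^sub>m commutator \<rho> A)"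

definition f_SLD :: "real \<Rightarrow> real" where
  "f_SLD x = (1 + x) / 2"

definition I_SLD :: "complex mat \<Rightarrow> complex mat \<Rightarrow> real" where
  "I_SLD \<rho> A = f_information f_SLD \<rho> A"

end

theory Submission
  imports Defs
begin

lemma adj_carrier[simp]: "mat_adjoint A \<in> carrier_mat (dim_col A) (dim_row A)"
  unfolding mat_adjoint_def by auto

lemma adj_dims[simp]: "dim_row (mat_adjoint A) = dim_col A" "dim_col (mat_adjoint A) = dim_row A"
  unfolding mat_adjoint_def by auto

lemma adj_index[simp]: "i < dim_col A \<Longrightarrow> j < dim_row A \<Longrightarrow>
   mat_adjoint A $$ (i,j) = cnj (A $$ (j,i))"
  unfolding mat_adjoint_def by (simp add: mat_of_rows_index)

lemma adj_mult: "A \<in> carrier_mat n m \<Longrightarrow> B \<in> carrier_mat m p \<Longrightarrow>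
   mat_adjoint (A * (B::complex mat)) = mat_adjoint B * mat_adjoint A"
  by (rule eq_matI) (auto simp: scalar_prod_def cnj_sum mult.commute)

lemma adj_adj: "mat_adjoint (mat_adjoint (A::complex mat)) = A"
  by (rule eq_matI) auto

lemma mtrace_comm: "A \<in> carrier_mat n m \<Longrightarrow> B \<in> carrier_mat m n \<Longrightarrow>
   mtrace (A * (B::complex mat)) = mtrace (B * A)"
  unfolding mtrace_def apply (simp add: scalar_prod_def atLeast0LessThan)
  apply (subst sum.swap) by (simp add: mult.commute)

lemma re_cnj_div: "Re (cnj y * (y / complex_of_real r)) = (cmod y)^2 / r"
proof -
  have "cnj y * (y / complex_of_real r) = complex_of_real ((cmod y)^2 / r)"
    using complex_norm_square[of y]
    by (simp add: mult.commute of_real_divide)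
  thus ?thesis by (metis Re_complex_of_real)
qed

lemma norm_formula:
  assumes ed: "eig_decomp \<rho> = (U,l)" and un: "unitary_n n U" and rc: "\<rho> \<in> carrier_mat n n"
    and Xc: "X \<in> carrier_mat n n"
  shows "norm_sq_f g \<rho> X = (\<Sum>i<n. \<Sum>j<n. (cmod ((mat_adjoint U * X * U) $$ (j,i)))^2 / m_f g (l j) (l i))"
proof -
  define Y where "Y = mat_adjoint U * X * U"
  define Z where "Z = mat n n (\<lambda>(i,j). Y $$ (i,j) / complex_of_real (m_f g (l i) (l j)))"
  have Uc: "U \<in> carrier_mat n n" using un unfolding unitary_n_def by auto
  have UHc: "mat_adjoint U \<in> carrier_mat n n" using Uc by (metis adj_carrier carrier_matD)
  have XHc: "mat_adjoint X \<in> carrier_mat n n" using Xc by (metis adj_carrier carrier_matD)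
  have Yc: "Y \<in> carrier_mat n n" unfolding Y_def using Uc UHc Xc by auto
  have Zc: "Z \<in> carrier_mat n n" unfolding Z_def by auto
  have nr: "dim_row \<rho> = n" using rc by auto
  have inv: "mf_LR_inv g \<rho> X = U * Z * mat_adjoint U"
    unfolding mf_LR_inv_def ed Z_def Y_def nr by (simp add: Let_def)
  have YH: "mat_adjoint Y = mat_adjoint U * mat_adjoint X * U"
    unfolding Y_def using Uc UHc Xc
    by (simp add: adj_mult[of _ n n _ n] adj_adj)
  have "mtrace (mat_adjoint X * (U * Z * mat_adjoint U)) = mtrace ((mat_adjoint X * U * Z) * mat_adjoint U)"
    using Uc UHc XHc Zc by (simp add: assoc_mult_mat[of _ n n _ n _ n])
  also have "\<dots> = mtrace (mat_adjoint U * (mat_adjoint X * U * Z))"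
    by (rule mtrace_comm[of _ n n], insert Uc UHc XHc Zc, auto)
  also have "\<dots> = mtrace (mat_adjoint Y * Z)"
    unfolding YH using Uc UHc XHc Zc by (simp add: assoc_mult_mat[of _ n n _ n _ n])
  also have "\<dots> = (\<Sum>i<n. \<Sum>j<n. cnj (Y $$ (j,i)) * (Y $$ (j,i) / complex_of_real (m_f g (l j) (l i))))"
    unfolding mtrace_def using Yc Zc unfolding Z_def
    by (auto simp: scalar_prod_def atLeast0LessThan intro!: sum.cong)
  finally have "mtrace (mat_adjoint X * mf_LR_inv g \<rho> X) = \<dots>" unfolding inv .
  thus ?thesis unfolding norm_sq_f_def Y_def[symmetric]
    by (simp only: Re_sum re_cnj_div)
qed

lemma adj_one[simp]: "mat_adjoint (1\<^sub>m n :: complex mat) = 1\<^sub>m n"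
  by (rule eq_matI) auto

lemma adj_diag_real: "mat_adjoint (mat_diag n (\<lambda>i. complex_of_real (l i))) = mat_diag n (\<lambda>i. complex_of_real (l i))"
  by (rule eq_matI) (auto simp: mat_diag_def)

lemma spec_one: "spec_mat n (1\<^sub>m n) l = mat_diag n (\<lambda>i. complex_of_real (l i))"
  unfolding spec_mat_def by (simp add: mat_diag_def)

lemma unitary_one: "unitary_n n (1\<^sub>m n)"
  unfolding unitary_n_def by simp

lemma quad1': "v \<in> carrier_vec 1 \<Longrightarrow> M \<in> carrier_mat 1 1 \<Longrightarrow> (M *\<^sub>v v) \<bullet>c v = M $$ (0,0) * (v $ 0 * cnj (v $ 0))"
  by (simp add: scalar_prod_def mult_mat_vec_def row_def)

lemma quad1: "v \<in> carrier_vec 1 \<Longrightarrow> Re (((mat_diag 1 (\<lambda>i. complex_of_real y) - mat_diag 1 (\<lambda>i. complex_of_real x)) *\<^sub>v v) \<bullet>c v)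
   = (y - x) * (cmod (v $ 0))^2"
proof -
  assume v: "v \<in> carrier_vec 1"
  have M: "mat_diag 1 (\<lambda>i. complex_of_real y) - mat_diag 1 (\<lambda>i. complex_of_real x) \<in> carrier_mat 1 1"
    by (rule minus_carrier_mat) auto
  have e: "(mat_diag 1 (\<lambda>i. complex_of_real y) - mat_diag 1 (\<lambda>i. complex_of_real x)) $$ (0,0) = complex_of_real (y - x)"
    by (simp add: mat_diag_def)
  show ?thesis unfolding quad1'[OF v M] e complex_mult_cnj
    by (simp add: cmod_power2)
qed

lemma F_op_ge1: assumes "f \<in> F_op" "1 \<le> t" shows "1 \<le> f t"
proof -
  have om: "operator_monotone f" using assms unfolding F_op_def by auto
  have le: "loewner_le 1 (spec_mat 1 (1\<^sub>m 1) (\<lambda>_. 1)) (spec_mat 1 (1\<^sub>m 1) (\<lambda>_. t))"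
    unfolding loewner_le_def hermitian_n_def spec_one adj_diag_real
  proof (intro conjI ballI)
    fix v :: "complex vec" assume "v \<in> carrier_vec 1"
    from quad1[OF this, of t 1] assms(2)
    show "0 \<le> Re (((mat_diag 1 (\<lambda>i. complex_of_real t) - mat_diag 1 (\<lambda>i. complex_of_real 1)) *\<^sub>v v) \<bullet>c v)"
      by (simp only: of_real_1) simp
  qed (auto simp del: mat_diag_one)
  have "loewner_le 1 (spec_mat 1 (1\<^sub>m 1) (f \<circ> (\<lambda>_. 1))) (spec_mat 1 (1\<^sub>m 1) (f \<circ> (\<lambda>_. t)))"
    using om[unfolded operator_monotone_def, rule_format, where n=1 and U="1\<^sub>m 1" and l="\<lambda>_. 1" and V="1\<^sub>m 1" and m="\<lambda>_. t"]
      le assms(2) unitary_one by simp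
  hence "0 \<le> Re (((mat_diag 1 (\<lambda>i. complex_of_real (f t)) - mat_diag 1 (\<lambda>i. complex_of_real (f 1))) *\<^sub>v unit_vec 1 0) \<bullet>c unit_vec 1 0)"
    unfolding loewner_le_def spec_one by (simp add: o_def)
  hence "0 \<le> (f t - f 1) * (cmod (unit_vec 1 0 $ 0))^2" by (simp only: quad1 unit_vec_carrier)
  thus ?thesis using assms(1) unfolding F_op_def by simp
qed

lemma Y_entry:
  assumes un: "unitary_n n U" and rho: "\<rho> = spec_mat n U l" and Ac: "A \<in> carrier_mat n n"
    and i: "i < n" and j: "j < n"
  shows "(mat_adjoint U * (\<i> \<cdot>\<^sub>m commutator \<rho> A) * U) $$ (i,j)
       = \<i> * (complex_of_real (l i) - complex_of_real (l j)) * (mat_adjoint U * A * U) $$ (i,j)"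
proof -
  define D where "D = mat_diag n (\<lambda>i. complex_of_real (l i))"
  define B where "B = mat_adjoint U * A * U"
  have Uc: "U \<in> carrier_mat n n" using un unfolding unitary_n_def by auto
  have UHc: "mat_adjoint U \<in> carrier_mat n n" using Uc by (metis adj_carrier carrier_matD)
  have Dc: "D \<in> carrier_mat n n" unfolding D_def by auto
  have Bc: "B \<in> carrier_mat n n" unfolding B_def using Uc UHc Ac by auto
  have u1: "mat_adjoint U * U = 1\<^sub>m n" and u2: "U * mat_adjoint U = 1\<^sub>m n" using un unfolding unitary_n_def by auto
  have rD: "\<rho> = U * D * mat_adjoint U" unfolding rho spec_mat_def D_def ..
  have rc: "\<rho> \<in> carrier_mat n n" unfolding rD using Uc UHc Dc by auto
  have h1: "mat_adjoint U * \<rho> = D * mat_adjoint U"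
  proof -
    have "mat_adjoint U * \<rho> = (mat_adjoint U * U) * D * mat_adjoint U"
      unfolding rD using Uc UHc Dc by (simp add: assoc_mult_mat[of _ n n _ n _ n])
    thus ?thesis using u1 Dc UHc by simp
  qed
  have h2: "\<rho> * U = U * D"
  proof -
    have "\<rho> * U = U * D * (mat_adjoint U * U)"
      unfolding rD using Uc UHc Dc by (simp add: assoc_mult_mat[of _ n n _ n _ n])
    thus ?thesis using u1 Dc Uc by simp
  qed
  have "mat_adjoint U * (\<i> \<cdot>\<^sub>m commutator \<rho> A) * U
      = \<i> \<cdot>\<^sub>m (mat_adjoint U * (\<rho> * A - A * \<rho>) * U)"
  proof -
    have Cc: "\<rho> * A - A * \<rho> \<in> carrier_mat n n" using Ac rc by auto
    have c2: "mat_adjoint U * (\<rho> * A - A * \<rho>) \<in> carrier_mat n n" using Cc UHc by auto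
    show ?thesis unfolding commutator_def
      by (simp only: mult_smult_distrib[OF UHc Cc] mult_smult_assoc_mat[OF c2 Uc])
  qed
  also have "mat_adjoint U * (\<rho> * A - A * \<rho>) * U = (mat_adjoint U * \<rho>) * A * U - mat_adjoint U * A * (\<rho> * U)"
  proof -
    have pa: "\<rho> * A \<in> carrier_mat n n" "A * \<rho> \<in> carrier_mat n n" using Ac rc by auto
    have pb: "mat_adjoint U * (\<rho> * A) \<in> carrier_mat n n" "mat_adjoint U * (A * \<rho>) \<in> carrier_mat n n"
      using pa UHc by auto
    have "mat_adjoint U * (\<rho> * A - A * \<rho>) * U = (mat_adjoint U * (\<rho> * A) - mat_adjoint U * (A * \<rho>)) * U"
      by (simp only: mult_minus_distrib_mat[OF UHc pa])
    also have "\<dots> = mat_adjoint U * (\<rho> * A) * U - mat_adjoint U * (A * \<rho>) * U"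
      by (simp only: minus_mult_distrib_mat[OF pb Uc])
    finally show ?thesis using Uc UHc Ac rc by (simp add: assoc_mult_mat[of _ n n _ n _ n])
  qed
  also have "\<dots> = D * B - B * D"
    unfolding h1 h2 B_def using Uc UHc Ac Dc
    by (simp add: assoc_mult_mat[of _ n n _ n _ n])
  finally have e: "mat_adjoint U * (\<i> \<cdot>\<^sub>m commutator \<rho> A) * U = \<i> \<cdot>\<^sub>m (D * B - B * D)" .
  show ?thesis unfolding e B_def[symmetric] using i j Bc Dc
    by (simp add: D_def mat_diag_mult_left[OF Bc] mat_diag_mult_right[OF Bc] algebra_simps)
qed

lemma rhoU:
  assumes un: "unitary_n n U" and rho: "\<rho> = spec_mat n U l"
  shows "\<rho> * U = U * mat_diag n (\<lambda>i. complex_of_real (l i))"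
proof -
  define D where "D = mat_diag n (\<lambda>i. complex_of_real (l i))"
  have Uc: "U \<in> carrier_mat n n" using un unfolding unitary_n_def by auto
  have UHc: "mat_adjoint U \<in> carrier_mat n n" using Uc by (metis adj_carrier carrier_matD)
  have Dc: "D \<in> carrier_mat n n" unfolding D_def by auto
  have u1: "mat_adjoint U * U = 1\<^sub>m n" using un unfolding unitary_n_def by auto
  have rD: "\<rho> = U * D * mat_adjoint U" unfolding rho spec_mat_def D_def ..
  have "\<rho> * U = U * D * (mat_adjoint U * U)"
    unfolding rD using Uc UHc Dc by (simp add: assoc_mult_mat[of _ n n _ n _ n])
  thus ?thesis using u1 Dc Uc unfolding D_def[symmetric] by simp
qed

lemma eig_vals:
  assumes un: "unitary_n 2 U" and rho: "mat_diag 2 (\<lambda>k. complex_of_real (h k)) = spec_mat 2 U l"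
    and i: "i < 2"
  shows "l i = h 0 \<or> l i = h 1"
proof (rule ccontr)
  assume ne: "\<not> (l i = h 0 \<or> l i = h 1)"
  have Uc: "U \<in> carrier_mat 2 2" using un unfolding unitary_n_def by auto
  have e: "mat_diag 2 (\<lambda>k. complex_of_real (h k)) * U = U * mat_diag 2 (\<lambda>i. complex_of_real (l i))"
    by (rule rhoU[OF un rho])
  have ent: "complex_of_real (h k) * U $$ (k,i) = U $$ (k,i) * complex_of_real (l i)" if k: "k < 2" for k
  proof -
    have "(mat_diag 2 (\<lambda>k. complex_of_real (h k)) * U) $$ (k,i) = (U * mat_diag 2 (\<lambda>i. complex_of_real (l i))) $$ (k,i)"
      using e by simp
    thus ?thesis using k i Uc by (simp add: mat_diag_mult_left[OF Uc] mat_diag_mult_right[OF Uc])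
  qed
  have z0: "U $$ (0,i) = 0"
  proof -
    have "complex_of_real (h 0 - l i) * U $$ (0,i) = 0" using ent[of 0] by (simp add: algebra_simps)
    moreover have "complex_of_real (h 0 - l i) \<noteq> 0" using ne by simp
    ultimately show ?thesis by simp
  qed
  have z1: "U $$ (1,i) = 0"
  proof -
    have "complex_of_real (h 1 - l i) * U $$ (1,i) = 0" using ent[of 1] by (simp add: algebra_simps)
    moreover have "complex_of_real (h 1 - l i) \<noteq> 0" using ne by simp
    ultimately show ?thesis by simp
  qed
  have "(mat_adjoint U * U) $$ (i,i) = 1" using un i unfolding unitary_n_def by auto
  moreover have "(mat_adjoint U * U) $$ (i,i) = 0"
    using i Uc z0 z1 by (simp add: scalar_prod_def numeral_2_eq_2 atLeast0LessThan lessThan_Suc)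
  ultimately show False by simp
qed


lemma f_zero_SLD: "f_zero f_SLD = 1/2"
proof -
  have "(f_SLD \<longlongrightarrow> (1 + 0) / 2) (at_right 0)"
    unfolding f_SLD_def by (intro tendsto_intros) auto
  hence "(f_SLD \<longlongrightarrow> 1/2) (at_right 0)" by simp
  thus ?thesis unfolding f_zero_def by (intro tendsto_Lim) auto
qed

lemma X_from_Y:
  assumes un: "unitary_n n U" and Xc: "X \<in> carrier_mat n n"
  shows "U * (mat_adjoint U * X * U) * mat_adjoint U = X"
proof -
  have Uc: "U \<in> carrier_mat n n" using un unfolding unitary_n_def by auto
  have UHc: "mat_adjoint U \<in> carrier_mat n n" using Uc by (metis adj_carrier carrier_matD)
  have u2: "U * mat_adjoint U = 1\<^sub>m n" using un unfolding unitary_n_def by auto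
  have "U * (mat_adjoint U * X * U) * mat_adjoint U = (U * mat_adjoint U) * X * (U * mat_adjoint U)"
    using Uc UHc Xc by (simp add: assoc_mult_mat[of _ n n _ n _ n])
  thus ?thesis using u2 Xc by simp
qed

lemma coef:
  assumes fF: "f \<in> F_op" and ab: "0 < b" "b < a" "a + b = 1" "0 < c" "c < b"
    and xy: "(x = a \<and> y = b) \<or> (x = b \<and> y = a)"
  shows "0 < 1 / 2 / 2 / m_f f_SLD x y - c / 2 / m_f f x y"
proof -
  have sym: "\<forall>t>0. t * f (inverse t) = f t" using fF unfolding F_op_def by auto
  have ge: "1 \<le> f (a / b)" using F_op_ge1[OF fF] ab by simp
  have s: "(b/a) * f (a/b) = f (b/a)" using sym[rule_format, of "b/a"] ab by simp
  have M: "m_f f x y = b * f (a/b)"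
    using xy
  proof
    assume "x = a \<and> y = b"
    thus ?thesis unfolding m_f_def using s[symmetric] ab by (simp add: field_simps)
  next
    assume "x = b \<and> y = a"
    thus ?thesis unfolding m_f_def by simp
  qed
  have MS: "m_f f_SLD x y = 1/2"
    using xy ab unfolding m_f_def f_SLD_def by (auto simp: field_simps)
  have Mb: "b \<le> m_f f x y" unfolding M using ge ab by simp
  have "c / 2 / m_f f x y < 1/2" using Mb ab by (simp add: field_simps)
  thus ?thesis unfolding MS by simp
qed


theorem mainTheorem7:
  fixes f :: "real \<Rightarrow> real" and k :: real
  assumes "f \<in> F_op_r"
    and "1 \<le> k" and "k < 1 / (2 * f_zero f)"
  shows "\<exists>n (\<rho>::complex mat) (A::complex mat).
           faithful_density n \<rho> \<and> hermitian_n n A \<and>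
           I_SLD \<rho> A > k * f_information f \<rho> A"
proof -
  have fF: "f \<in> F_op" using assms(1) unfolding F_op_r_def by auto
  define f0 where "f0 = f_zero f"
  have f0ne: "f0 \<noteq> 0" using assms(1) unfolding F_op_r_def f0_def by auto
  have f0pos: "0 < f0"
  proof (rule ccontr)
    assume "\<not> 0 < f0"
    hence "f0 < 0" using f0ne by simp
    hence "1 / (2 * f0) < 0" by (simp add: divide_neg_pos)
    thus False using assms(2,3) unfolding f0_def by linarith
  qed
  define c where "c = k * f0"
  have cpos: "0 < c" unfolding c_def using f0pos assms(2) by simp
  have chalf: "c < 1/2" unfolding c_def using assms(3) f0pos unfolding f0_def[symmetric]
    by (simp add: field_simps)
  define b where "b = (c + 1/2) / 2"
  define a where "a = 1 - b"
  have ab: "0 < b" "b < a" "a + b = 1" "0 < c" "c < b"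
    unfolding a_def b_def using cpos chalf by (auto simp: field_simps)
  define h where "h = (\<lambda>k::nat. if k = 0 then a else b)"
  define \<rho> where "\<rho> = mat_diag 2 (\<lambda>k. complex_of_real (h k))"
  define A :: "complex mat" where "A = mat 2 2 (\<lambda>(i,j). if i = j then 0 else 1)"
  have rc: "\<rho> \<in> carrier_mat 2 2" unfolding \<rho>_def by simp
  have Ac: "A \<in> carrier_mat 2 2" unfolding A_def by simp
  have fd: "faithful_density 2 \<rho>"
    unfolding faithful_density_def hermitian_n_def
  proof (intro conjI ballI impI)
    show "\<rho> \<in> carrier_mat 2 2" by (rule rc)
    show "mat_adjoint \<rho> = \<rho>" unfolding \<rho>_def by (rule adj_diag_real)
    have "complex_of_real b + complex_of_real a = complex_of_real (a + b)" by simp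
    also have "\<dots> = 1" using ab by simp
    finally have ba: "complex_of_real b + complex_of_real a = 1" .
    show "mtrace \<rho> = 1" unfolding mtrace_def \<rho>_def using ba
      by (simp add: mat_diag_def numeral_2_eq_2 lessThan_Suc h_def)
    fix v :: "complex vec" assume v: "v \<in> carrier_vec 2" and nz: "v \<noteq> 0\<^sub>v 2"
    have "v $ 0 \<noteq> 0 \<or> v $ 1 \<noteq> 0"
    proof (rule ccontr)
      assume "\<not> ?thesis"
      hence "v = 0\<^sub>v 2" using v by (intro eq_vecI) (auto simp: less_2_cases_iff)
      thus False using nz by simp
    qed
    hence pos: "0 < a * (cmod (v $ 0))^2 + b * (cmod (v $ 1))^2"
      using ab by (auto intro: add_pos_nonneg add_nonneg_pos)
    have "(\<rho> *\<^sub>v v) \<bullet>c v = complex_of_real a * (v $ 0 * cnj (v $ 0)) + complex_of_real b * (v $ 1 * cnj (v $ 1))"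
      using v unfolding \<rho>_def
      by (simp add: mat_diag_def scalar_prod_def mult_mat_vec_def row_def numeral_2_eq_2 atLeast0LessThan lessThan_Suc h_def)
    hence "Re ((\<rho> *\<^sub>v v) \<bullet>c v) = a * (cmod (v $ 0))^2 + b * (cmod (v $ 1))^2"
      by (simp add: complex_mult_cnj cmod_power2)
    thus "0 < Re ((\<rho> *\<^sub>v v) \<bullet>c v)" using pos by simp
  qed
  have hA: "hermitian_n 2 A"
    unfolding hermitian_n_def using Ac by (auto intro!: eq_matI simp: A_def)
  have ex: "\<exists>p. case p of (U, l) \<Rightarrow> unitary_n (dim_row \<rho>) U \<and> \<rho> = spec_mat (dim_row \<rho>) U l"
  proof -
    have dr: "dim_row \<rho> = 2" using rc by auto
    have "unitary_n 2 (1\<^sub>m 2) \<and> \<rho> = spec_mat 2 (1\<^sub>m 2) h"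
      by (simp add: unitary_one spec_one \<rho>_def)
    thus ?thesis using dr by (intro exI[of _ "(1\<^sub>m 2, h)"]) simp
  qed
  obtain U l where ed: "eig_decomp \<rho> = (U, l)" by (cases "eig_decomp \<rho>") auto
  have "case eig_decomp \<rho> of (U, l) \<Rightarrow> unitary_n (dim_row \<rho>) U \<and> \<rho> = spec_mat (dim_row \<rho>) U l"
    unfolding eig_decomp_def by (rule someI_ex[OF ex])
  hence un: "unitary_n 2 U" and rs: "\<rho> = spec_mat 2 U l" using ed rc by auto
  have lv: "l i = a \<or> l i = b" if "i < 2" for i
    using eig_vals[OF un rs[unfolded \<rho>_def] that] unfolding h_def by simp
  define X where "X = \<i> \<cdot>\<^sub>m commutator \<rho> A"
  have Xc: "X \<in> carrier_mat 2 2" unfolding X_def commutator_def using rc Ac by auto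
  define Y where "Y = mat_adjoint U * X * U"
  have Yc: "Y \<in> carrier_mat 2 2" unfolding Y_def using Xc un unfolding unitary_n_def
    by (auto simp: adj_carrier)
  have Ye: "Y $$ (i,j) = \<i> * (complex_of_real (l i) - complex_of_real (l j)) * (mat_adjoint U * A * U) $$ (i,j)"
    if "i < 2" "j < 2" for i j
    unfolding Y_def X_def by (rule Y_entry[OF un rs Ac that])
  have Yl: "l i \<noteq> l j" if "i < 2" "j < 2" "Y $$ (i,j) \<noteq> 0" for i j
    using Ye[OF that(1,2)] that(3) by auto
  have X01: "X $$ (0,1) \<noteq> 0"
  proof -
    have "X $$ (0,1) = \<i> * (complex_of_real a - complex_of_real b)"
      unfolding X_def commutator_def \<rho>_def A_def
      by (simp add: mat_diag_def scalar_prod_def numeral_2_eq_2 atLeast0LessThan lessThan_Suc h_def)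
    thus ?thesis using ab by simp
  qed
  have "\<exists>i<2. \<exists>j<2. Y $$ (i,j) \<noteq> 0"
  proof (rule ccontr)
    assume "\<not> ?thesis"
    hence "Y = 0\<^sub>m 2 2" using Yc by (intro eq_matI) auto
    hence "X = 0\<^sub>m 2 2" using X_from_Y[OF un Xc] un unfolding Y_def[symmetric] unitary_n_def
      by auto
    thus False using X01 by simp
  qed
  then obtain i0 j0 where ij0: "i0 < 2" "j0 < 2" "Y $$ (i0,j0) \<noteq> 0" by auto
  define T where "T = (\<lambda>j i. (cmod (Y $$ (j,i)))^2 * (1/2/2 / m_f f_SLD (l j) (l i) - c/2 / m_f f (l j) (l i)))"
  have Tnn: "0 \<le> T j i" and Tpos: "Y $$ (j,i) \<noteq> 0 \<Longrightarrow> 0 < T j i" if "j < 2" "i < 2" for i j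
  proof -
    show "Y $$ (j,i) \<noteq> 0 \<Longrightarrow> 0 < T j i"
    proof -
      assume nz: "Y $$ (j,i) \<noteq> 0"
      have "l j \<noteq> l i" using Yl[OF that nz] .
      hence "(l j = a \<and> l i = b) \<or> (l j = b \<and> l i = a)" using lv[OF that(1)] lv[OF that(2)] by auto
      from coef[OF fF ab this] nz show "0 < T j i" unfolding T_def by simp
    qed
    show "0 \<le> T j i"
    proof (cases "Y $$ (j,i) = 0")
      case True thus ?thesis unfolding T_def by simp
    next
      case False thus ?thesis using \<open>Y $$ (j,i) \<noteq> 0 \<Longrightarrow> 0 < T j i\<close> by simp
    qed
  qed
  have sumpos: "0 < (\<Sum>i<2. \<Sum>j<2. T j i)"
  proof (rule sum_pos2[of _ j0])
    show "0 < (\<Sum>j<2. T j j0)"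
      by (rule sum_pos2[of _ i0]) (use ij0 Tnn Tpos in auto)
    show "\<And>i. i \<in> {..<2} \<Longrightarrow> 0 \<le> (\<Sum>j<2. T j i)"
      using Tnn by (auto intro: sum_nonneg)
  qed (use ij0 in auto)
  have nS: "norm_sq_f f_SLD \<rho> X = (\<Sum>i<2. \<Sum>j<2. (cmod (Y $$ (j,i)))^2 / m_f f_SLD (l j) (l i))"
    unfolding Y_def by (rule norm_formula[OF ed un rc Xc])
  have nF: "norm_sq_f f \<rho> X = (\<Sum>i<2. \<Sum>j<2. (cmod (Y $$ (j,i)))^2 / m_f f (l j) (l i))"
    unfolding Y_def by (rule norm_formula[OF ed un rc Xc])
  have "I_SLD \<rho> A - k * f_information f \<rho> A = (\<Sum>i<2. \<Sum>j<2. T j i)"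
    unfolding I_SLD_def f_information_def X_def[symmetric] nS nF f_zero_SLD f0_def[symmetric] T_def
    by (simp add: sum_distrib_left sum_subtractf[symmetric] c_def algebra_simps)
  with sumpos have "k * f_information f \<rho> A < I_SLD \<rho> A" by linarith
  with fd hA show ?thesis by blast
qed


end
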